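(* Let $Q\subset\mathbb{C}$ be an unshielded continuum and $m:Q\to Y$ a monotone surjective map such that $m(\mathrm{imp}(\alpha))$ is a point for every angle $\alpha$. Then $Y$ is locally connected, and the map $\Phi_m:S^1\to Y$, $\Phi_m(\alpha)=m(\mathrm{imp}(\alpha))$, is a well-defined continuous surjection.
   Context: $Q$ is unshielded if $Q=\partial U_\infty$, $U_\infty$ the component of $\widehat{\mathbb{C}}\setminus Q$ containing $\infty$. Let $\Psi:\widehat{\mathbb{C}}\setminus\overline{\mathbb{D}}\to U_\infty$ be the Riemann map with $\Psi(\infty)=\infty$, $\Psi'(\infty)>0$; angles $\alpha\in S^1=\mathbb{R}/\mathbb{Z}$. The impression $\mathrm{imp}(\alpha)$ is the set of all limits $\lim\Psi(z_i)$ with $|z_i|>1$, $z_i\to e^{2\pi i\alpha}$. Monotone: continuous with connected fibers. *)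

theory Defs
  imports "HOL-Analysis.Analysis"
begin

definition continuum :: "complex set \<Rightarrow> bool" where
  "continuum Q \<longleftrightarrow> Q \<noteq> {} \<and> compact Q \<and> connected Q"

text \<open>Unshielded: Q is the boundary of the unbounded complementary component
  (the library's "outside Q" is the union of the unbounded components of the
  complement; for compact Q in the plane this is the single component U_infinity
  with the point at infinity removed).\<close>
definition unshielded :: "complex set \<Rightarrow> bool" where
  "unshielded Q \<longleftrightarrow> Q = frontier (outside Q)"

text \<open>Psi is the Riemann map from the exterior of the closed unit disc onto
  U_infinity, normalised by Psi(infinity) = infinity and Psi'(infinity) > 0,
  i.e. Psi(z)/z tends to a positive real number as z tends to infinity.\<close>
definition exterior_riemann_map :: "complex set \<Rightarrow> (complex \<Rightarrow> complex) \<Rightarrow> bool" where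
  "exterior_riemann_map Q \<Psi> \<longleftrightarrow>
     \<Psi> holomorphic_on {z. 1 < norm z} \<and>
     bij_betw \<Psi> {z. 1 < norm z} (outside Q) \<and>
     (\<exists>c::real. 0 < c \<and> ((\<lambda>z. \<Psi> z / z) \<longlongrightarrow> complex_of_real c) at_infinity)"

text \<open>Impression of the angle whose point on the unit circle is w
  (w = exp(2 pi i alpha)).\<close>
definition impression :: "(complex \<Rightarrow> complex) \<Rightarrow> complex \<Rightarrow> complex set" where
  "impression \<Psi> w = {L. \<exists>z::nat \<Rightarrow> complex. (\<forall>i. 1 < norm (z i)) \<and>
      z \<longlonglongrightarrow> w \<and> (\<lambda>i. \<Psi> (z i)) \<longlonglongrightarrow> L}"

definition monotone_map :: "complex set \<Rightarrow> (complex \<Rightarrow> 'b::topological_space) \<Rightarrow> bool" where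
  "monotone_map Q m \<longleftrightarrow> continuous_on Q m \<and> (\<forall>y. connected {x\<in>Q. m x = y})"

end

theory Submission
  imports Defs "HOL-Complex_Analysis.Complex_Analysis"
begin

lemma Hausdorff_t2: "Hausdorff_space (euclidean :: 'b::t2_space topology)"
  unfolding Hausdorff_space_def disjnt_def
  by (simp add: separation_t2)

lemma the_single:
  assumes "m ` I = {y}" "L \<in> I"
  shows "(THE y. m ` I = {y}) = m L"
proof -
  have "(THE y. m ` I = {y}) = y"
    by (rule the_equality) (use assms in auto)
  moreover have "m L = y" using assms by auto
  ultimately show ?thesis by simp
qed

lemma imp_diag:
  assumes y: "\<forall>n. y n \<in> impression \<Psi> (v n)"
    and v: "v \<longlonglongrightarrow> w" and yL: "y \<longlonglongrightarrow> L"
  shows "L \<in> impression \<Psi> w"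
proof -
  have "\<exists>\<zeta>. 1 < norm \<zeta> \<and> dist \<zeta> (v n) < inverse (real (Suc n))
          \<and> dist (\<Psi> \<zeta>) (y n) < inverse (real (Suc n))" for n
  proof -
    obtain s where s: "\<forall>i. 1 < norm (s i)" "s \<longlonglongrightarrow> v n" "(\<lambda>i. \<Psi> (s i)) \<longlonglongrightarrow> y n"
      using y unfolding impression_def by blast
    have e: "0 < inverse (real (Suc n))" by simp
    have "eventually (\<lambda>i. dist (s i) (v n) < inverse (real (Suc n))
          \<and> dist (\<Psi> (s i)) (y n) < inverse (real (Suc n))) sequentially"
      using tendstoD[OF s(2) e] tendstoD[OF s(3) e] by (rule eventually_conj)
    then obtain N where "\<forall>i\<ge>N. dist (s i) (v n) < inverse (real (Suc n))
          \<and> dist (\<Psi> (s i)) (y n) < inverse (real (Suc n))"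
      unfolding eventually_sequentially by blast
    then show ?thesis using s(1) by blast
  qed
  then obtain z where z: "\<And>n. 1 < norm (z n)" "\<And>n. dist (z n) (v n) < inverse (real (Suc n))"
    "\<And>n. dist (\<Psi> (z n)) (y n) < inverse (real (Suc n))"
    by metis
  have "z \<longlonglongrightarrow> w"
  proof (rule Lim_transform[OF v])
    show "(\<lambda>n. z n - v n) \<longlonglongrightarrow> 0"
      by (rule Lim_null_comparison[OF _ LIMSEQ_inverse_real_of_nat])
         (use z(2) in \<open>auto simp: dist_norm less_imp_le\<close>)
  qed
  moreover have "(\<lambda>n. \<Psi> (z n)) \<longlonglongrightarrow> L"
  proof (rule Lim_transform[OF yL])
    show "(\<lambda>n. \<Psi> (z n) - y n) \<longlonglongrightarrow> 0"
      by (rule Lim_null_comparison[OF _ LIMSEQ_inverse_real_of_nat])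
         (use z(3) in \<open>auto simp: dist_norm less_imp_le\<close>)
  qed
  ultimately show ?thesis using z(1) unfolding impression_def by blast
qed

lemma imp_subset:
  fixes Q UO :: "complex set"
  assumes holo: "\<Psi> holomorphic_on {z. 1 < norm z}" and inj: "inj_on \<Psi> {z. 1 < norm z}"
    and img: "\<Psi> ` {z. 1 < norm z} = UO" and oO: "open UO" and QO: "Q = frontier UO"
    and w: "norm w = 1"
  shows "impression \<Psi> w \<subseteq> Q"
proof
  fix L assume "L \<in> impression \<Psi> w"
  then obtain z where z: "\<forall>i. 1 < norm (z i)" "z \<longlonglongrightarrow> w" "(\<lambda>i. \<Psi> (z i)) \<longlonglongrightarrow> L"
    unfolding impression_def by blast
  have "L \<in> closure UO"
    unfolding closure_sequential using z img by (intro exI[of _ "\<lambda>i. \<Psi> (z i)"]) auto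
  moreover have "L \<notin> UO"
  proof
    assume "L \<in> UO"
    then obtain z0 where z0: "1 < norm z0" "\<Psi> z0 = L" using img by auto
    define r where "r = (norm z0 - 1) / 2"
    have r: "0 < r" using z0 by (simp add: r_def)
    have bsub: "ball z0 r \<subseteq> {z. 1 < norm z}"
    proof
      fix y assume "y \<in> ball z0 r"
      then have "norm (z0 - y) < r" by (simp add: dist_norm)
      moreover have "norm z0 \<le> norm y + norm (z0 - y)"
        by (metis add.commute diff_add_cancel norm_triangle_ineq)
      ultimately show "y \<in> {z. 1 < norm z}" using z0 by (simp add: r_def)
    qed
    have opV: "open (\<Psi> ` ball z0 r)"
      by (rule open_mapping_thm3) (use holo inj bsub in \<open>auto intro: holomorphic_on_subset inj_on_subset\<close>)
    have "L \<in> \<Psi> ` ball z0 r" using z0 r by auto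
    then have ev1: "eventually (\<lambda>i. \<Psi> (z i) \<in> \<Psi> ` ball z0 r) sequentially"
      using z(3) opV topological_tendstoD by blast
    have ev2: "eventually (\<lambda>i. dist (z i) w < r) sequentially"
      using tendstoD[OF z(2) r] .
    obtain i where i: "\<Psi> (z i) \<in> \<Psi> ` ball z0 r" "dist (z i) w < r"
      using eventually_happens'[OF sequentially_bot eventually_conj[OF ev1 ev2]] by blast
    then obtain y where y: "y \<in> ball z0 r" "\<Psi> (z i) = \<Psi> y" by auto
    have "z i = y" using inj_onD[OF inj y(2)] y(1) bsub z(1) by auto
    have "dist z0 (z i) < r" using y(1) \<open>z i = y\<close> by simp
    moreover have "dist z0 w \<le> dist z0 (z i) + dist (z i) w" by (rule dist_triangle)
    ultimately have "dist z0 w < 2 * r" using i(2) by linarith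
    moreover have "norm z0 - norm w \<le> dist z0 w"
      by (simp add: dist_norm norm_triangle_ineq2)
    ultimately show False using w by (simp add: r_def)
  qed
  ultimately show "L \<in> Q" using QO oO by (simp add: frontier_def interior_open)
qed


theorem lemma3p5:
  fixes Q :: "complex set" and \<Psi> :: "complex \<Rightarrow> complex"
    and m :: "complex \<Rightarrow> 'b::t2_space"
  assumes "continuum Q" and "unshielded Q"
    and "exterior_riemann_map Q \<Psi>"
    and "monotone_map Q m" and "m ` Q = UNIV"
    and "\<forall>w\<in>sphere 0 1. \<exists>y. m ` impression \<Psi> w = {y}"
  shows "locally_connected_space (euclidean :: 'b topology)
    \<and> (\<forall>w\<in>sphere 0 1. impression \<Psi> w \<subseteq> Q)
    \<and> continuous_on (sphere 0 1) (\<lambda>w. THE y. m ` impression \<Psi> w = {y})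
    \<and> (\<lambda>w. THE y. m ` impression \<Psi> w = {y}) ` sphere 0 1 = UNIV"
proof -
  define E where "E = {z::complex. 1 < norm z}"
  define UO where "UO = outside Q"
  define \<Phi> where "\<Phi> = (\<lambda>w. THE y. m ` impression \<Psi> w = {y})"
  have cQ: "compact Q" using assms(1) by (simp add: continuum_def)
  have oO: "open UO" unfolding UO_def by (rule open_outside) (use cQ compact_imp_closed in auto)
  have QO: "Q = frontier UO" using assms(2) by (simp add: unshielded_def UO_def)
  have disj: "Q \<inter> UO = {}" using QO oO frontier_disjoint_eq by blast
  have holo: "\<Psi> holomorphic_on E" and bij: "bij_betw \<Psi> E UO"
    and lim: "\<exists>c::real. 0 < c \<and> ((\<lambda>z. \<Psi> z / z) \<longlongrightarrow> complex_of_real c) at_infinity"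
    using assms(3) by (auto simp: exterior_riemann_map_def E_def UO_def)
  have inj: "inj_on \<Psi> E" and img: "\<Psi> ` E = UO" using bij by (auto simp: bij_betw_def)
  have contPsi: "continuous_on E \<Psi>" using holo holomorphic_on_imp_continuous_on by blast
  have contm: "continuous_on Q m" using assms(4) by (simp add: monotone_map_def)
  have impQ: "\<forall>w\<in>sphere 0 1. impression \<Psi> w \<subseteq> Q"
    using imp_subset[OF holo[unfolded E_def] inj[unfolded E_def] img[unfolded E_def] oO QO] by simp
  have PhiL: "\<Phi> w = m L" if "w \<in> sphere 0 1" "L \<in> impression \<Psi> w" for w L
    using assms(6) that the_single unfolding \<Phi>_def by metis
  have ne: "impression \<Psi> w \<noteq> {}" if "w \<in> sphere 0 1" for w
    using assms(6) that by force
  have cont: "continuous_on (sphere 0 1) \<Phi>"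
    unfolding continuous_on_eq_continuous_within
  proof
    fix w :: complex assume w: "w \<in> sphere 0 1"
    show "continuous (at w within sphere 0 1) \<Phi>"
    proof (rule continuous_within_sequentiallyI)
      fix u :: "nat \<Rightarrow> complex" assume u: "u \<longlonglongrightarrow> w" "\<forall>n. u n \<in> sphere 0 1"
      show "(\<lambda>n. \<Phi> (u n)) \<longlonglongrightarrow> \<Phi> w"
      proof (rule topological_tendstoI, rule ccontr)
        fix U assume U: "open U" "\<Phi> w \<in> U" "\<not> eventually (\<lambda>n. \<Phi> (u n) \<in> U) sequentially"
        have "infinite {n. \<Phi> (u n) \<notin> U}"
          using U(3) unfolding cofinite_eq_sequentially[symmetric] eventually_cofinite by simp
        then obtain r :: "nat \<Rightarrow> nat" where r: "strict_mono r" "\<And>n. \<Phi> (u (r n)) \<notin> U"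
          using infinite_enumerate by blast
        define L where "L = (\<lambda>n. SOME L. L \<in> impression \<Psi> (u (r n)))"
        have L: "L n \<in> impression \<Psi> (u (r n))" for n
          unfolding L_def using ne u(2) by (metis some_in_eq)
        have LQ: "\<forall>n. L n \<in> Q" using L impQ u(2) by blast
        obtain L0 s where s: "L0 \<in> Q" "strict_mono s" "(L \<circ> s) \<longlonglongrightarrow> L0"
          using seq_compactE[OF compact_imp_seq_compact[OF cQ] LQ] by blast
        have "((u \<circ> r) \<circ> s) \<longlonglongrightarrow> w"
          using LIMSEQ_subseq_LIMSEQ[OF LIMSEQ_subseq_LIMSEQ[OF u(1) r(1)] s(2)] .
        then have "L0 \<in> impression \<Psi> w"
          by (rule imp_diag[rotated]) (use L s(3) in auto)
        then have "\<Phi> w = m L0" using PhiL w by blast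
        have "(\<lambda>n. m ((L \<circ> s) n)) \<longlonglongrightarrow> m L0"
          by (rule continuous_on_tendsto_compose[OF contm s(3) s(1)]) (use LQ in auto)
        then have "eventually (\<lambda>n. m ((L \<circ> s) n) \<in> U) sequentially"
          using U(1,2) \<open>\<Phi> w = m L0\<close> topological_tendstoD by metis
        then obtain n where "m ((L \<circ> s) n) \<in> U"
          using eventually_happens'[OF sequentially_bot] by blast
        moreover have "m ((L \<circ> s) n) = \<Phi> (u (r (s n)))"
          using PhiL[OF _ L] u(2) by simp
        ultimately show False using r(2) by simp
      qed
    qed
  qed
  have surj: "\<Phi> ` sphere 0 1 = UNIV"
  proof (intro set_eqI iffI)
    fix y :: 'b
    show "y \<in> \<Phi> ` sphere 0 1" if "y \<in> UNIV"
    proof -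
      obtain x where x: "x \<in> Q" "m x = y" using assms(5) by (metis UNIV_I imageE)
      have "x \<in> closure UO" using x(1) QO by (simp add: frontier_def)
      then obtain q where q: "\<forall>n. q n \<in> UO" "q \<longlonglongrightarrow> x"
        unfolding closure_sequential by blast
      define z where "z = (\<lambda>n. inv_into E \<Psi> (q n))"
      have zE: "z n \<in> E" and qz: "\<Psi> (z n) = q n" for n
        using q(1) img unfolding z_def by (auto intro: inv_into_into f_inv_into_f)
      obtain c :: real where c: "0 < c" "((\<lambda>z. \<Psi> z / z) \<longlongrightarrow> complex_of_real c) at_infinity"
        using lim by blast
      have "eventually (\<lambda>z. dist (\<Psi> z / z) (complex_of_real c) < c / 2) at_infinity"
        using tendstoD[OF c(2), of "c/2"] c(1) by simp
      then obtain b where b: "\<And>z. b \<le> norm z \<Longrightarrow> dist (\<Psi> z / z) (complex_of_real c) < c / 2"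
        unfolding eventually_at_infinity by blast
      have grow: "c / 2 * norm z \<le> norm (\<Psi> z)" if "max b 1 \<le> norm z" for z
      proof -
        have z0: "z \<noteq> 0" using that by auto
        have "norm (complex_of_real c) \<le> norm (\<Psi> z / z) + dist (\<Psi> z / z) (complex_of_real c)"
          by (metis dist_norm norm_triangle_sub dist_commute)
        then have "c / 2 \<le> norm (\<Psi> z / z)" using b[of z] that c(1) by simp
        then have "c / 2 * norm z \<le> norm (\<Psi> z / z) * norm z" by (rule mult_right_mono) simp
        also have "\<dots> = norm (\<Psi> z)" using z0 by (simp add: norm_divide)
        finally show ?thesis .
      qed
      obtain K where K: "0 < K" "\<And>n. norm (q n) \<le> K"
        using convergent_imp_Bseq[of q] q(2) unfolding Bseq_def convergent_def by blast
      define M where "M = max (max b 1) (2 * K / c)"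
      have zM: "z n \<in> cball 0 M" for n
      proof (cases "max b 1 \<le> norm (z n)")
        case True
        then have "c / 2 * norm (z n) \<le> K" using grow[OF True] qz[of n] K(2)[of n] by simp
        then have "norm (z n) \<le> 2 * K / c" using c(1) by (simp add: field_simps)
        then show ?thesis by (simp add: M_def)
      next
        case False then show ?thesis unfolding M_def mem_cball dist_0_norm by linarith
      qed
      obtain w r where w: "w \<in> cball 0 M" "strict_mono r" "(z \<circ> r) \<longlonglongrightarrow> w"
        using seq_compactE[OF compact_imp_seq_compact[OF compact_cball], of z] zM by blast
      have "1 \<le> norm w"
      proof (rule LIMSEQ_le_const)
        show "(\<lambda>n. norm ((z \<circ> r) n)) \<longlonglongrightarrow> norm w" using w(3) by (rule tendsto_norm)
        show "\<exists>N. \<forall>n\<ge>N. 1 \<le> norm ((z \<circ> r) n)" using zE by (auto simp: E_def less_imp_le)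
      qed
      moreover have "\<not> 1 < norm w"
      proof
        assume "1 < norm w"
        then have wE: "w \<in> E" by (simp add: E_def)
        have "(\<lambda>n. \<Psi> ((z \<circ> r) n)) \<longlonglongrightarrow> \<Psi> w"
          by (rule continuous_on_tendsto_compose[OF contPsi w(3) wE]) (use zE in auto)
        moreover have "(\<lambda>n. \<Psi> ((z \<circ> r) n)) \<longlonglongrightarrow> x"
          using LIMSEQ_subseq_LIMSEQ[OF q(2) w(2)] qz by (simp add: o_def)
        ultimately have "x = \<Psi> w" using LIMSEQ_unique by blast
        then have "x \<in> UO" using img wE by auto
        then show False using x(1) disj by auto
      qed
      ultimately have ws: "w \<in> sphere 0 1" by simp
      have "x \<in> impression \<Psi> w"
        unfolding impression_def
        using zE w(3) LIMSEQ_subseq_LIMSEQ[OF q(2) w(2)] qz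
        by (intro CollectI exI[of _ "z \<circ> r"]) (auto simp: E_def o_def)
      then have "\<Phi> w = y" using PhiL[OF ws] x(2) by simp
      then show ?thesis using ws by blast
    qed
  qed simp
  have lcS: "locally_connected_space (top_of_set (sphere (0::complex) 1))"
    unfolding locally_connected_space
  proof (intro allI impI)
    fix V x assume "openin (top_of_set (sphere (0::complex) 1)) V \<and> x \<in> V"
    then obtain U where "openin (top_of_set (sphere 0 1)) U" "connected U" "x \<in> U" "U \<subseteq> V"
      using locally_connected_sphere[of "0::complex" 1] unfolding locally_connected by blast
    then show "\<exists>U. openin (top_of_set (sphere 0 1)) U \<and> connectedin (top_of_set (sphere 0 1)) U \<and> x \<in> U \<and> U \<subseteq> V"
      by (metis connectedin_subtopology connectedin_iff_connected openin_subset topspace_euclidean_subtopology)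
  qed
  have qm: "quotient_map (top_of_set (sphere (0::complex) 1)) (euclidean :: 'b topology) \<Phi>"
  proof (rule continuous_imp_quotient_map)
    show "continuous_map (top_of_set (sphere 0 1)) euclidean \<Phi>" using cont by simp
    show "compact_space (top_of_set (sphere (0::complex) 1))"
      by (simp add: compact_space_subtopology compactin_euclidean_iff)
    show "Hausdorff_space (euclidean :: 'b topology)" by (rule Hausdorff_t2)
    show "\<Phi> ` topspace (top_of_set (sphere 0 1)) = topspace euclidean" using surj by simp
  qed
  have "locally_connected_space (euclidean :: 'b topology)"
    by (rule locally_connected_space_quotient_map_image[OF lcS qm])
  then show ?thesis using impQ cont surj unfolding \<Phi>_def by blast
qed

end
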